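(* Assume the Framework (the Purification Postulate is not needed). Let $\rho_1,\rho_2,\rho_3\in\mathfrak S_1(\mathrm A)$ with $\rho_1\ne\rho_3$ and $\rho_2=p\rho_1+(1-p)\rho_3$ for some $0<p<1$, and let $\Psi_i\in\mathfrak S_1(\mathrm A\mathrm B)$ be a purification of $\rho_i$ for $i=1,2,3$ (i.e. $\Psi_i$ pure with $(\mathcal I_{\mathrm A}\otimes e_{\mathrm B})\Psi_i=\rho_i$). Then for no finite $N\ge1$ is there a transformation $\mathcal C\in\mathfrak T(\mathrm A^{\otimes N},\mathrm A\mathrm B)$ such that $\mathcal C(\rho_i^{\otimes N})=\Psi_i$ for all $i=1,2,3$.
   Context: Framework. We work in an operational-probabilistic theory: there is a collection of systems $\mathrm A,\mathrm B,\dots$, closed under a composition $\mathrm A\mathrm B$ (associative, symmetric up to a reversible swap, with a trivial system $\mathrm I$ satisfying $\mathrm A\mathrm I=\mathrm A$); for each pair of systems a set $\mathfrak T(\mathrm A,\mathrm B)$ of transformations; a test from $\mathrm A$ to $\mathrm B$ is a finite collection $\{\mathcal C_i\}_{i\in X}\subseteq\mathfrak T(\mathrm A,\mathrm B)$, and every transformation belongs to some test. Tests are closed under sequential composition, parallel composition ($\otimes$), coarse-graining (summing outcomes over the blocks of a partition of $X$) and conditioning (choosing the next test depending on the outcome of the previous one). States of $\mathrm A$ are the elements of $\mathfrak S(\mathrm A):=\mathfrak T(\mathrm I,\mathrm A)$, effects are the elements of $\mathfrak T(\mathrm A,\mathrm I)$, and transformations $\mathrm I\to\mathrm I$ are probabilities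 in $[0,1]$ (those of a test sum to $1$; composition is multiplication). An effect $a$ and a state $\rho$ give the probability $(a|\rho)$. States (effects) are identified when they give equal probabilities on all effects (states); transformations $\mathcal C,\mathcal C'$ are identified when $\mathcal C\otimes\mathcal I_{\mathrm S}$ and $\mathcal C'\otimes\mathcal I_{\mathrm S}$ act identically on all states of $\mathrm A\mathrm S$ for every system $\mathrm S$. States span a finite-dimensional real vector space $\mathfrak S_{\mathbb R}(\mathrm A)$, transformations act linearly, and $\mathfrak T_{\mathbb R}(\mathrm A,\mathrm B)$ is the real span of $\mathfrak T(\mathrm A,\mathrm B)$. Standing assumptions: (i) causality: each system $\mathrm A$ has a unique deterministic effect $e_{\mathrm A}$ (the effect forming a one-outcome observation test), and $e_{\mathrm A\mathrm B}=e_{\mathrm A}\otimes e_{\mathrm B}$; (ii) local discriminability: if two states of $\mathrm A\mathrm B$ differ, some product effect $a\otimes b$ gives them different probabilities; (iii) all sets of states are closed, the theory is not deterministic (hence all sets of states, effects and transformations are convex), and perfectly distinguishable states exist. A state $\rho$ is normalized if $(e|\rho)=1$; $\mathfrak S_1(\mathrm A)$ is the set of normalized states. A channel is a $\mathcal C\in\mathfrak T(\mathrm A,\mathrm B)$ with $e_{\mathrm B}\circ\mathcal C=e_{\mathrm A}$. A channel $\mathcal U\in\mathfrak T(\mathrm A,\mathrm B)$ is reversible if some channel $\mathcal W\in\mathfrak T(\mathrm B,\mathrm A)$ satisfies $\mathcal W\mathcal U=\mathcal I_{\mathrm A}$, $\mathcal U\mathcal W=\mathcal I_{\mathrm B}$;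 $\mathbf G_{\mathrm A}$ is the group of reversible channels on $\mathrm A$. The marginal of a state $\sigma$ of $\mathrm A\mathrm B$ on $\mathrm A$ is $(\mathcal I_{\mathrm A}\otimes e_{\mathrm B})\sigma$. Refinement. For $\mathcal C\in\mathfrak T(\mathrm A,\mathrm B)$, write $\mathcal D\prec\mathcal C$ if there are a test $\{\mathcal D_j\}_{j\in Y}$ and $Y_0\subseteq Y$ with $\mathcal C=\sum_{j\in Y_0}\mathcal D_j$ and $\mathcal D\in\{\mathcal D_j\}_{j\in Y_0}$; the refinement set is $D_{\mathcal C}=\{\mathcal D:\mathcal D\prec\mathcal C\}$. $\mathcal C$ is atomic if $\mathcal D\prec\mathcal C$ implies $\mathcal D=\lambda\mathcal C$ for some $\lambda\in[0,1]$. A pure state is an atomic state; a state is mixed otherwise. *)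

theory Defs
  imports Complex_Main
begin

text \<open>
An operational-probabilistic theory (OPT), with transformations identified
(equality of elements of the ambient real vector space 't is the identification
of transformations).  'The set trans A B' is the set of transformations from A to B,
'tests A B' the set of tests (finite families, encoded as lists), 'seqc D C' is the
sequential composition D after C, 'parc C D' is the parallel composition C (x) D,
'idt A' the identity on A, 'deff A' the deterministic effect e_A.
\<close>

record ('s, 't) opt_data =
  scomp :: "'s \<Rightarrow> 's \<Rightarrow> 's"
  sunit :: 's
  trans :: "'s \<Rightarrow> 's \<Rightarrow> 't set"
  tests :: "'s \<Rightarrow> 's \<Rightarrow> 't list set"
  seqc  :: "'t \<Rightarrow> 't \<Rightarrow> 't"
  parc  :: "'t \<Rightarrow> 't \<Rightarrow> 't"
  idt   :: "'s \<Rightarrow> 't"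
  deff  :: "'s \<Rightarrow> 't"

definition opt :: "('s, 't::real_vector) opt_data \<Rightarrow> bool" where
  "opt T \<longleftrightarrow>
    \<comment> \<open>trivial system\<close>
    (\<forall>A. scomp T A (sunit T) = A)
    \<comment> \<open>tests are finite nonempty collections of transformations; every transformation is in a test\<close>
  \<and> (\<forall>A B t. t \<in> tests T A B \<longrightarrow> t \<noteq> [] \<and> set t \<subseteq> trans T A B)
  \<and> (\<forall>A B C. C \<in> trans T A B \<longrightarrow> (\<exists>t \<in> tests T A B. C \<in> set t))
    \<comment> \<open>identities\<close>
  \<and> (\<forall>A. [idt T A] \<in> tests T A A)
  \<and> (\<forall>A B C. C \<in> trans T A B \<longrightarrow> seqc T (idt T B) C = C \<and> seqc T C (idt T A) = C)
    \<comment> \<open>sequential composition of tests\<close>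
  \<and> (\<forall>A B C t s. t \<in> tests T A B \<longrightarrow> s \<in> tests T B C \<longrightarrow>
        [seqc T y x. x \<leftarrow> t, y \<leftarrow> s] \<in> tests T A C)
    \<comment> \<open>parallel composition of tests\<close>
  \<and> (\<forall>A B C D t s. t \<in> tests T A B \<longrightarrow> s \<in> tests T C D \<longrightarrow>
        [parc T x y. x \<leftarrow> t, y \<leftarrow> s] \<in> tests T (scomp T A C) (scomp T B D))
    \<comment> \<open>coarse-graining over a partition of the outcome set into m nonempty blocks\<close>
  \<and> (\<forall>A B t m f. t \<in> tests T A B \<longrightarrow> f ` {..<length t} = {..<(m::nat)} \<longrightarrow>
        map (\<lambda>k. \<Sum>i\<in>{i. i < length t \<and> f i = k}. t ! i) [0..<m] \<in> tests T A B)
    \<comment> \<open>conditioning\<close>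
  \<and> (\<forall>A B C t ss. t \<in> tests T A B \<longrightarrow> length ss = length t \<longrightarrow>
        (\<forall>i < length t. ss ! i \<in> tests T B C) \<longrightarrow>
        concat (map (\<lambda>i. map (\<lambda>D. seqc T D (t ! i)) (ss ! i)) [0..<length t]) \<in> tests T A C)
    \<comment> \<open>transformations act linearly; composition is bilinear\<close>
  \<and> (\<forall>x y z. seqc T (x + y) z = seqc T x z + seqc T y z \<and> seqc T x (y + z) = seqc T x y + seqc T x z)
  \<and> (\<forall>r x y. seqc T (r *\<^sub>R x) y = r *\<^sub>R seqc T x y \<and> seqc T x (r *\<^sub>R y) = r *\<^sub>R seqc T x y)
  \<and> (\<forall>x y z. parc T (x + y) z = parc T x z + parc T y z \<and> parc T x (y + z) = parc T x y + parc T x z)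
  \<and> (\<forall>r x y. parc T (r *\<^sub>R x) y = r *\<^sub>R parc T x y \<and> parc T x (r *\<^sub>R y) = r *\<^sub>R parc T x y)
    \<comment> \<open>transformations I -> I are probabilities in [0,1]; tests I -> I sum to 1;
        non-determinism: every binary probability distribution is a test\<close>
  \<and> idt T (sunit T) \<noteq> 0
  \<and> trans T (sunit T) (sunit T) = (\<lambda>r. r *\<^sub>R idt T (sunit T)) ` {0..1}
  \<and> (\<forall>t \<in> tests T (sunit T) (sunit T). sum_list t = idt T (sunit T))
  \<and> (\<forall>p::real. 0 \<le> p \<and> p \<le> 1 \<longrightarrow>
        [p *\<^sub>R idt T (sunit T), (1 - p) *\<^sub>R idt T (sunit T)] \<in> tests T (sunit T) (sunit T))
    \<comment> \<open>causality: unique deterministic effect, multiplicative under composition\<close>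
  \<and> (\<forall>A. [deff T A] \<in> tests T A (sunit T))
  \<and> (\<forall>A a. [a] \<in> tests T A (sunit T) \<longrightarrow> a = deff T A)
  \<and> (\<forall>A B. deff T (scomp T A B) = parc T (deff T A) (deff T B))
    \<comment> \<open>states are identified by their probabilities on effects\<close>
  \<and> (\<forall>A \<rho> \<sigma>. \<rho> \<in> trans T (sunit T) A \<longrightarrow> \<sigma> \<in> trans T (sunit T) A \<longrightarrow>
        (\<forall>a \<in> trans T A (sunit T). seqc T a \<rho> = seqc T a \<sigma>) \<longrightarrow> \<rho> = \<sigma>)
    \<comment> \<open>transformations are identified by their action (with ancillas) on states\<close>
  \<and> (\<forall>A B C C'. C \<in> trans T A B \<longrightarrow> C' \<in> trans T A B \<longrightarrow>
        (\<forall>S. \<forall>\<rho> \<in> trans T (sunit T) (scomp T A S).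
            seqc T (parc T C (idt T S)) \<rho> = seqc T (parc T C' (idt T S)) \<rho>) \<longrightarrow> C = C')
    \<comment> \<open>local discriminability\<close>
  \<and> (\<forall>A B \<Psi> \<Phi>. \<Psi> \<in> trans T (sunit T) (scomp T A B) \<longrightarrow> \<Phi> \<in> trans T (sunit T) (scomp T A B) \<longrightarrow>
        \<Psi> \<noteq> \<Phi> \<longrightarrow> (\<exists>a \<in> trans T A (sunit T). \<exists>b \<in> trans T B (sunit T).
            seqc T (parc T a b) \<Psi> \<noteq> seqc T (parc T a b) \<Phi>))"

definition states :: "('s, 't) opt_data \<Rightarrow> 's \<Rightarrow> 't set" where
  "states T A = trans T (sunit T) A"

definition normalized_state :: "('s, 't) opt_data \<Rightarrow> 's \<Rightarrow> 't \<Rightarrow> bool" where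
  "normalized_state T A \<rho> \<longleftrightarrow> \<rho> \<in> states T A \<and> seqc T (deff T A) \<rho> = idt T (sunit T)"

definition refines :: "('s, 't::real_vector) opt_data \<Rightarrow> 's \<Rightarrow> 's \<Rightarrow> 't \<Rightarrow> 't \<Rightarrow> bool" where
  "refines T A B D C \<longleftrightarrow> (\<exists>t \<in> tests T A B. \<exists>Y0 \<subseteq> {..<length t}.
      C = (\<Sum>j\<in>Y0. t ! j) \<and> D \<in> (\<lambda>j. t ! j) ` Y0)"

definition atomic :: "('s, 't::real_vector) opt_data \<Rightarrow> 's \<Rightarrow> 's \<Rightarrow> 't \<Rightarrow> bool" where
  "atomic T A B C \<longleftrightarrow> C \<in> trans T A B \<and>
     (\<forall>D. refines T A B D C \<longrightarrow> (\<exists>c::real. 0 \<le> c \<and> c \<le> 1 \<and> D = c *\<^sub>R C))"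

definition pure_state :: "('s, 't::real_vector) opt_data \<Rightarrow> 's \<Rightarrow> 't \<Rightarrow> bool" where
  "pure_state T A \<rho> \<longleftrightarrow> atomic T (sunit T) A \<rho>"

definition marginal :: "('s, 't) opt_data \<Rightarrow> 's \<Rightarrow> 's \<Rightarrow> 't \<Rightarrow> 't" where
  "marginal T A B \<sigma> = seqc T (parc T (idt T A) (deff T B)) \<sigma>"

definition purification :: "('s, 't::real_vector) opt_data \<Rightarrow> 's \<Rightarrow> 's \<Rightarrow> 't \<Rightarrow> 't \<Rightarrow> bool" where
  "purification T A B \<Psi> \<rho> \<longleftrightarrow>
     normalized_state T (scomp T A B) \<Psi> \<and> pure_state T (scomp T A B) \<Psi> \<and> marginal T A B \<Psi> = \<rho>"

fun syspow :: "('s, 't) opt_data \<Rightarrow> 's \<Rightarrow> nat \<Rightarrow> 's" where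
  "syspow T A 0 = sunit T"
| "syspow T A (Suc 0) = A"
| "syspow T A (Suc (Suc n)) = scomp T A (syspow T A (Suc n))"

fun tpow :: "('s, 't) opt_data \<Rightarrow> 't \<Rightarrow> nat \<Rightarrow> 't" where
  "tpow T \<rho> 0 = idt T (sunit T)"
| "tpow T \<rho> (Suc 0) = \<rho>"
| "tpow T \<rho> (Suc (Suc n)) = parc T \<rho> (tpow T \<rho> (Suc n))"

end

theory Submission
  imports Defs
begin

lemma lc_eq: "[f x y. x \<leftarrow> t, y \<leftarrow> s] = concat (map (\<lambda>x. map (f x) s) t)"
  by (induct t) simp_all

lemma lc_length: "length (concat (map (\<lambda>x. map (f x) s) t)) = length t * length s"
  by (induct t) simp_all

lemma lc_nth: "i < length t \<Longrightarrow> j < length s \<Longrightarrow>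
   concat (map (\<lambda>x. map (f x) s) t) ! (i * length s + j) = f (t!i) (s!j)"
proof (induct t arbitrary: i)
  case Nil then show ?case by simp
next
  case (Cons a t)
  show ?case
  proof (cases i)
    case 0 then show ?thesis using Cons by (simp add: nth_append)
  next
    case (Suc i')
    have "(i * length s + j) = length s + (i' * length s + j)" using Suc by simp
    then show ?thesis using Cons Suc by (simp add: nth_append lc_length)
  qed
qed

lemma sum_left:
  assumes add: "\<And>x y z. f (x + y) z = f x z + f y z" and z: "\<And>z. f 0 z = 0"
  shows "f (sum h S) z = sum (\<lambda>i. f (h i) z) S"
proof (cases "finite S")
  case True then show ?thesis by (induct S rule: finite_induct) (simp_all add: add z)
qed (simp add: z)

lemma sum_right:
  assumes add: "\<And>x y z. f z (x + y) = f z x + f z y" and z: "\<And>z. f z 0 = 0"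
  shows "f z (sum h S) = sum (\<lambda>i. f z (h i)) S"
proof (cases "finite S")
  case True then show ?thesis by (induct S rule: finite_induct) (simp_all add: add z)
qed (simp add: z)

lemma prod_refine:
  fixes f :: "'t::real_vector \<Rightarrow> 't \<Rightarrow> 't"
  assumes addl: "\<And>x y z. f (x + y) z = f x z + f y z" and zl: "\<And>z. f 0 z = 0"
    and addr: "\<And>x y z. f z (x + y) = f z x + f z y" and zr: "\<And>z. f z 0 = 0"
    and Y0: "Y0 \<subseteq> {..<length t}" and Y1: "Y1 \<subseteq> {..<length s}"
    and a: "a \<in> Y0" and b: "b \<in> Y1"
  shows "\<exists>Y \<subseteq> {..<length (concat (map (\<lambda>x. map (f x) s) t))}.
     f (\<Sum>i\<in>Y0. t!i) (\<Sum>j\<in>Y1. s!j) = (\<Sum>k\<in>Y. concat (map (\<lambda>x. map (f x) s) t) ! k)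
     \<and> f (t!a) (s!b) \<in> (\<lambda>k. concat (map (\<lambda>x. map (f x) s) t) ! k) ` Y"
proof -
  let ?L = "concat (map (\<lambda>x. map (f x) s) t)"
  let ?n = "length s"
  let ?g = "\<lambda>(i,j). i * ?n + j"
  define Y where "Y = ?g ` (Y0 \<times> Y1)"
  have inj: "inj_on ?g (Y0 \<times> Y1)"
  proof (rule inj_onI)
    fix u v assume u: "u \<in> Y0 \<times> Y1" and v: "v \<in> Y0 \<times> Y1" and e: "?g u = ?g v"
    obtain i j where u': "u = (i,j)" by (cases u)
    obtain i' j' where v': "v = (i',j')" by (cases v)
    have j: "j < ?n" "j' < ?n" using u v u' v' Y1 by auto
    have e': "i * ?n + j = i' * ?n + j'" using e u' v' by simp
    then have "(i * ?n + j) mod ?n = (i' * ?n + j') mod ?n" by simp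
    then have jj: "j = j'" using j by simp
    then have "i * ?n = i' * ?n" using e' by simp
    then have "i = i'" using j by auto
    then show "u = v" using u' v' jj by simp
  qed
  have fin0: "finite Y0" using Y0 finite_subset by blast
  have fin1: "finite Y1" using Y1 finite_subset by blast
  have "f (\<Sum>i\<in>Y0. t!i) (\<Sum>j\<in>Y1. s!j) = (\<Sum>i\<in>Y0. \<Sum>j\<in>Y1. f (t!i) (s!j))"
    by (simp add: sum_left[of f, OF addl zl] sum_right[of f, OF addr zr] sum.swap[of _ Y1])
  also have "\<dots> = (\<Sum>(i,j)\<in>Y0 \<times> Y1. f (t!i) (s!j))"
    by (simp add: sum.cartesian_product)
  also have "\<dots> = (\<Sum>(i,j)\<in>Y0 \<times> Y1. ?L ! ?g (i,j))"
    apply (rule sum.cong, simp) apply clarify apply (rule lc_nth[symmetric])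
    using Y0 Y1 by auto
  also have "\<dots> = (\<Sum>k\<in>Y. ?L ! k)"
    unfolding Y_def by (subst sum.reindex[OF inj]) (simp add: case_prod_beta)
  finally have 1: "f (\<Sum>i\<in>Y0. t!i) (\<Sum>j\<in>Y1. s!j) = (\<Sum>k\<in>Y. ?L ! k)" .
  have "f (t!a) (s!b) = ?L ! ?g (a,b)" using a b Y0 Y1 by (simp, intro lc_nth[symmetric]) auto
  moreover have "?g (a,b) \<in> Y" unfolding Y_def using a b by blast
  ultimately have 2: "f (t!a) (s!b) \<in> (\<lambda>k. ?L ! k) ` Y" by blast
  have 3: "Y \<subseteq> {..<length ?L}"
  proof
    fix k assume "k \<in> Y"
    then obtain i j where "i \<in> Y0" "j \<in> Y1" "k = i * ?n + j" unfolding Y_def by auto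
    then have "i < length t" "j < ?n" "k = i * ?n + j" using Y0 Y1 by auto
    then have "k < length t * ?n"
    proof -
      assume h: "i < length t" "j < ?n" "k = i * ?n + j"
      have "i * ?n + j < Suc i * ?n" using h by simp
      also have "Suc i * ?n \<le> length t * ?n" using h by (intro mult_le_mono1) simp
      finally show ?thesis using h by simp
    qed
    then show "k \<in> {..<length ?L}" by (simp add: lc_length)
  qed
  show ?thesis using 1 2 3 by blast
qed


context
  fixes T :: "('s, 't::real_vector) opt_data"
  assumes O: "opt T"
begin

lemma o_sub: "t \<in> tests T A B \<Longrightarrow> set t \<subseteq> trans T A B"
  using O[unfolded opt_def, THEN conjunct2, THEN conjunct1] by blast
lemma o_ex: "C \<in> trans T A B \<Longrightarrow> \<exists>t \<in> tests T A B. C \<in> set t"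
  using O[unfolded opt_def, THEN conjunct2, THEN conjunct2, THEN conjunct1] by blast
lemma o_idr: "C \<in> trans T A B \<Longrightarrow> seqc T C (idt T A) = C"
  using O[unfolded opt_def, THEN conjunct2, THEN conjunct2, THEN conjunct2, THEN conjunct2, THEN conjunct1] by blast
lemma o_seq: "t \<in> tests T A B \<Longrightarrow> s \<in> tests T B C \<Longrightarrow> [seqc T y x. x \<leftarrow> t, y \<leftarrow> s] \<in> tests T A C"
  using O[unfolded opt_def, THEN conjunct2, THEN conjunct2, THEN conjunct2, THEN conjunct2, THEN conjunct2, THEN conjunct1] by blast
lemma o_par: "t \<in> tests T A B \<Longrightarrow> s \<in> tests T C D \<Longrightarrow> [parc T x y. x \<leftarrow> t, y \<leftarrow> s] \<in> tests T (scomp T A C) (scomp T B D)"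
  using O[unfolded opt_def, THEN conjunct2, THEN conjunct2, THEN conjunct2, THEN conjunct2, THEN conjunct2, THEN conjunct2, THEN conjunct1] by blast
lemma o_cond: "t \<in> tests T A B \<Longrightarrow> length ss = length t \<Longrightarrow>
        (\<forall>i < length t. ss ! i \<in> tests T B C) \<Longrightarrow>
        concat (map (\<lambda>i. map (\<lambda>D. seqc T D (t ! i)) (ss ! i)) [0..<length t]) \<in> tests T A C"
  using O[unfolded opt_def, THEN conjunct2, THEN conjunct2, THEN conjunct2, THEN conjunct2, THEN conjunct2, THEN conjunct2, THEN conjunct2, THEN conjunct2, THEN conjunct1] by blast
lemma o_unit: "scomp T A (sunit T) = A"
  using O[unfolded opt_def, THEN conjunct1] by blast
lemma o_seqadd: "seqc T (x + y) z = seqc T x z + seqc T y z" "seqc T x (y + z) = seqc T x y + seqc T x z"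
  using O[unfolded opt_def, THEN conjunct2, THEN conjunct2, THEN conjunct2, THEN conjunct2, THEN conjunct2, THEN conjunct2, THEN conjunct2, THEN conjunct2, THEN conjunct2, THEN conjunct1] by blast+
lemma o_seqscale: "seqc T (r *\<^sub>R x) y = r *\<^sub>R seqc T x y" "seqc T x (r *\<^sub>R y) = r *\<^sub>R seqc T x y"
  using O[unfolded opt_def, THEN conjunct2, THEN conjunct2, THEN conjunct2, THEN conjunct2, THEN conjunct2, THEN conjunct2, THEN conjunct2, THEN conjunct2, THEN conjunct2, THEN conjunct2, THEN conjunct1] by blast+
lemma o_paradd: "parc T (x + y) z = parc T x z + parc T y z" "parc T x (y + z) = parc T x y + parc T x z"
  using O[unfolded opt_def, THEN conjunct2, THEN conjunct2, THEN conjunct2, THEN conjunct2, THEN conjunct2, THEN conjunct2, THEN conjunct2, THEN conjunct2, THEN conjunct2, THEN conjunct2, THEN conjunct2, THEN conjunct1] by blast+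
lemma o_parscale: "parc T (r *\<^sub>R x) y = r *\<^sub>R parc T x y" "parc T x (r *\<^sub>R y) = r *\<^sub>R parc T x y"
  using O[unfolded opt_def, THEN conjunct2, THEN conjunct2, THEN conjunct2, THEN conjunct2, THEN conjunct2, THEN conjunct2, THEN conjunct2, THEN conjunct2, THEN conjunct2, THEN conjunct2, THEN conjunct2, THEN conjunct2, THEN conjunct1] by blast+
lemma o_idnz: "idt T (sunit T) \<noteq> 0"
  using O[unfolded opt_def, THEN conjunct2, THEN conjunct2, THEN conjunct2, THEN conjunct2, THEN conjunct2, THEN conjunct2, THEN conjunct2, THEN conjunct2, THEN conjunct2, THEN conjunct2, THEN conjunct2, THEN conjunct2, THEN conjunct2, THEN conjunct1] by blast
lemma o_prob: "0 \<le> p \<Longrightarrow> p \<le> 1 \<Longrightarrow>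
   [p *\<^sub>R idt T (sunit T), (1 - p) *\<^sub>R idt T (sunit T)] \<in> tests T (sunit T) (sunit T)"
  using O[unfolded opt_def, THEN conjunct2, THEN conjunct2, THEN conjunct2, THEN conjunct2, THEN conjunct2, THEN conjunct2, THEN conjunct2, THEN conjunct2, THEN conjunct2, THEN conjunct2, THEN conjunct2, THEN conjunct2, THEN conjunct2, THEN conjunct2, THEN conjunct2, THEN conjunct2, THEN conjunct1] by blast

lemma o_seq0: "seqc T 0 z = 0" "seqc T z 0 = 0"
  using o_seqscale(1)[where r=0 and x=0 and y=z] o_seqscale(2)[where r=0 and x=z and y=0] by simp_all
lemma o_par0: "parc T 0 z = 0" "parc T z 0 = 0"
  using o_parscale(1)[where r=0 and x=0 and y=z] o_parscale(2)[where r=0 and x=z and y=0] by simp_all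

lemma R_par:
  assumes "refines T (sunit T) A x y" "refines T (sunit T) X x' y'"
  shows "refines T (sunit T) (scomp T A X) (parc T x x') (parc T y y')"
proof -
  obtain t Y0 a where t: "t \<in> tests T (sunit T) A" "Y0 \<subseteq> {..<length t}" "y = (\<Sum>j\<in>Y0. t!j)"
    "a \<in> Y0" "x = t!a"
    using assms(1) unfolding refines_def by blast
  obtain s Y1 b where s: "s \<in> tests T (sunit T) X" "Y1 \<subseteq> {..<length s}" "y' = (\<Sum>j\<in>Y1. s!j)"
    "b \<in> Y1" "x' = s!b"
    using assms(2) unfolding refines_def by blast
  have L: "concat (map (\<lambda>x. map (parc T x) s) t) \<in> tests T (sunit T) (scomp T A X)"
    using o_par[OF t(1) s(1)] unfolding o_unit .
  obtain Y where "Y \<subseteq> {..<length (concat (map (\<lambda>x. map (parc T x) s) t))}"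
     "parc T (\<Sum>i\<in>Y0. t!i) (\<Sum>j\<in>Y1. s!j) = (\<Sum>k\<in>Y. concat (map (\<lambda>x. map (parc T x) s) t) ! k)"
     "parc T (t!a) (s!b) \<in> (\<lambda>k. concat (map (\<lambda>x. map (parc T x) s) t) ! k) ` Y"
    using prod_refine[of "parc T", OF o_paradd(1) o_par0(1) o_paradd(2) o_par0(2) t(2) s(2) t(4) s(4)]
    by blast
  then show ?thesis unfolding refines_def using t(3,5) s(3,5)
    by (intro bexI[OF _ L]) blast
qed

lemma R_seq:
  assumes "refines T (sunit T) X x y" "C \<in> trans T X Z"
  shows "refines T (sunit T) Z (seqc T C x) (seqc T C y)"
proof -
  obtain t Y0 a where t: "t \<in> tests T (sunit T) X" "Y0 \<subseteq> {..<length t}" "y = (\<Sum>j\<in>Y0. t!j)"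
    "a \<in> Y0" "x = t!a"
    using assms(1) unfolding refines_def by blast
  obtain s where s: "s \<in> tests T X Z" "C \<in> set s" using o_ex[OF assms(2)] by blast
  then obtain b where b: "b < length s" "C = s!b" by (metis in_set_conv_nth)
  let ?f = "\<lambda>x y. seqc T y x"
  have L: "concat (map (\<lambda>x. map (?f x) s) t) \<in> tests T (sunit T) Z"
    using o_seq[OF t(1) s(1)] .
  obtain Y where "Y \<subseteq> {..<length (concat (map (\<lambda>x. map (?f x) s) t))}"
     "?f (\<Sum>i\<in>Y0. t!i) (\<Sum>j\<in>{b}. s!j) = (\<Sum>k\<in>Y. concat (map (\<lambda>x. map (?f x) s) t) ! k)"
     "?f (t!a) (s!b) \<in> (\<lambda>k. concat (map (\<lambda>x. map (?f x) s) t) ! k) ` Y"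
    using prod_refine[of ?f, OF o_seqadd(2) o_seq0(2) o_seqadd(1) o_seq0(1) t(2) _ t(4), of "{b}" s b] b
    by blast
  then show ?thesis unfolding refines_def using t(3,5) b
    by (intro bexI[OF _ L]) auto
qed

lemma R_base:
  assumes r: "\<rho> \<in> trans T (sunit T) A" and sg: "\<sigma> \<in> trans T (sunit T) A" and p: "0 \<le> p" "p \<le> 1"
  shows "refines T (sunit T) A (p *\<^sub>R \<rho>) (p *\<^sub>R \<rho> + (1 - p) *\<^sub>R \<sigma>)"
proof -
  obtain t1 where t1: "t1 \<in> tests T (sunit T) A" "\<rho> \<in> set t1" using o_ex[OF r] by blast
  then obtain k1 where k1: "k1 < length t1" "\<rho> = t1!k1" by (metis in_set_conv_nth)
  obtain t3 where t3: "t3 \<in> tests T (sunit T) A" "\<sigma> \<in> set t3" using o_ex[OF sg] by blast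
  then obtain k3 where k3: "k3 < length t3" "\<sigma> = t3!k3" by (metis in_set_conv_nth)
  let ?t = "[p *\<^sub>R idt T (sunit T), (1 - p) *\<^sub>R idt T (sunit T)]"
  have "concat (map (\<lambda>i. map (\<lambda>D. seqc T D (?t ! i)) ([t1, t3] ! i)) [0..<length ?t]) \<in> tests T (sunit T) A"
    by (rule o_cond[OF o_prob[OF p]]) (use t1 t3 in \<open>auto simp: less_Suc_eq\<close>)
  moreover have "[0..<length ?t] = [0, 1]" by (simp add: upt_rec)
  ultimately have L0: "map (\<lambda>D. seqc T D (p *\<^sub>R idt T (sunit T))) t1 @
       map (\<lambda>D. seqc T D ((1 - p) *\<^sub>R idt T (sunit T))) t3 \<in> tests T (sunit T) A" by simp
  have e1: "map (\<lambda>D. seqc T D (p *\<^sub>R idt T (sunit T))) t1 = map (\<lambda>D. p *\<^sub>R D) t1"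
    using o_sub[OF t1(1)] by (auto simp: o_seqscale o_idr)
  have e3: "map (\<lambda>D. seqc T D ((1 - p) *\<^sub>R idt T (sunit T))) t3 = map (\<lambda>D. (1 - p) *\<^sub>R D) t3"
    using o_sub[OF t3(1)] by (auto simp: o_seqscale o_idr)
  let ?L = "map (\<lambda>D. p *\<^sub>R D) t1 @ map (\<lambda>D. (1 - p) *\<^sub>R D) t3"
  have L: "?L \<in> tests T (sunit T) A" using L0 e1 e3 by simp
  have n1: "?L ! k1 = p *\<^sub>R \<rho>" using k1 by (simp add: nth_append)
  have n3: "?L ! (length t1 + k3) = (1 - p) *\<^sub>R \<sigma>" using k3 by (simp add: nth_append)
  have d: "k1 \<noteq> length t1 + k3" using k1 by simp
  have "p *\<^sub>R \<rho> + (1 - p) *\<^sub>R \<sigma> = (\<Sum>j\<in>{k1, length t1 + k3}. ?L ! j)"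
    using d n1 n3 by simp
  moreover have "{k1, length t1 + k3} \<subseteq> {..<length ?L}" using k1 k3 by auto
  ultimately show ?thesis unfolding refines_def using L n1
    by (intro bexI[OF _ L] exI[of _ "{k1, length t1 + k3}"]) auto
qed

lemma R_pow:
  assumes r: "\<rho> \<in> trans T (sunit T) A" and sg: "\<sigma> \<in> trans T (sunit T) A" and p: "0 \<le> p" "p \<le> 1"
  shows "refines T (sunit T) (syspow T A (Suc n)) (p ^ Suc n *\<^sub>R tpow T \<rho> (Suc n))
           (tpow T (p *\<^sub>R \<rho> + (1 - p) *\<^sub>R \<sigma>) (Suc n))"
proof (induct n)
  case 0 then show ?case using R_base[OF r sg p] by simp
next
  case (Suc n)
  have "refines T (sunit T) (scomp T A (syspow T A (Suc n))) (parc T (p *\<^sub>R \<rho>) (p ^ Suc n *\<^sub>R tpow T \<rho> (Suc n)))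
     (parc T (p *\<^sub>R \<rho> + (1 - p) *\<^sub>R \<sigma>) (tpow T (p *\<^sub>R \<rho> + (1 - p) *\<^sub>R \<sigma>) (Suc n)))"
    by (rule R_par[OF R_base[OF r sg p] Suc])
  then show ?case by (simp add: o_parscale mult_ac)
qed

end

theorem mainTheorem20:
  fixes T :: "('s, 't::real_vector) opt_data"
    and A B :: 's and \<rho>1 \<rho>2 \<rho>3 \<Psi>1 \<Psi>2 \<Psi>3 :: 't and p :: real
  assumes "opt T"
    and "normalized_state T A \<rho>1" "normalized_state T A \<rho>2" "normalized_state T A \<rho>3"
    and "\<rho>1 \<noteq> \<rho>3"
    and "0 < p" "p < 1" "\<rho>2 = p *\<^sub>R \<rho>1 + (1 - p) *\<^sub>R \<rho>3"
    and "purification T A B \<Psi>1 \<rho>1" "purification T A B \<Psi>2 \<rho>2" "purification T A B \<Psi>3 \<rho>3"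
  shows "\<not> (\<exists>N::nat. N \<ge> 1 \<and> (\<exists>C \<in> trans T (syspow T A N) (scomp T A B).
            seqc T C (tpow T \<rho>1 N) = \<Psi>1 \<and> seqc T C (tpow T \<rho>2 N) = \<Psi>2 \<and> seqc T C (tpow T \<rho>3 N) = \<Psi>3))"
proof
  assume "\<exists>N::nat. N \<ge> 1 \<and> (\<exists>C \<in> trans T (syspow T A N) (scomp T A B).
            seqc T C (tpow T \<rho>1 N) = \<Psi>1 \<and> seqc T C (tpow T \<rho>2 N) = \<Psi>2 \<and> seqc T C (tpow T \<rho>3 N) = \<Psi>3)"
  then obtain n C where C: "C \<in> trans T (syspow T A (Suc n)) (scomp T A B)"
    "seqc T C (tpow T \<rho>1 (Suc n)) = \<Psi>1" "seqc T C (tpow T \<rho>2 (Suc n)) = \<Psi>2"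
    "seqc T C (tpow T \<rho>3 (Suc n)) = \<Psi>3"
    by (metis Suc_le_D One_nat_def)
  note O = assms(1)
  have r1: "\<rho>1 \<in> trans T (sunit T) A" and r3: "\<rho>3 \<in> trans T (sunit T) A"
    using assms(2,4) unfolding normalized_state_def states_def by auto
  have P2: "atomic T (sunit T) (scomp T A B) \<Psi>2" and
       N: "\<And>\<Psi> \<rho>. purification T A B \<Psi> \<rho> \<Longrightarrow> seqc T (deff T (scomp T A B)) \<Psi> = idt T (sunit T)"
    using assms(10) unfolding purification_def pure_state_def normalized_state_def by auto
  have key: "\<Psi> = \<Psi>2" if R: "refines T (sunit T) (scomp T A B) (q ^ Suc n *\<^sub>R \<Psi>) \<Psi>2"
    and q: "0 < q" and pu: "purification T A B \<Psi> \<rho>" for q \<Psi> \<rho>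
  proof -
    obtain c where c: "q ^ Suc n *\<^sub>R \<Psi> = c *\<^sub>R \<Psi>2" using P2 R unfolding atomic_def by blast
    have "q ^ Suc n *\<^sub>R idt T (sunit T) = c *\<^sub>R idt T (sunit T)"
      using arg_cong[OF c, of "seqc T (deff T (scomp T A B))"] N[OF pu] N[OF assms(10)]
      by (simp add: o_seqscale[OF O])
    then have "(q ^ Suc n - c) *\<^sub>R idt T (sunit T) = 0" by (simp add: scaleR_diff_left)
    then have "c = q ^ Suc n" using o_idnz[OF O] by simp
    then have "q ^ Suc n *\<^sub>R (\<Psi> - \<Psi>2) = 0" using c by (simp add: scaleR_diff_right)
    then show ?thesis using q by simp
  qed
  have "refines T (sunit T) (scomp T A B) (seqc T C (p ^ Suc n *\<^sub>R tpow T \<rho>1 (Suc n))) \<Psi>2"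
    using R_seq[OF O R_pow[OF O r1 r3, of p n] C(1)] assms(6,7,8) C(3) by simp
  then have "\<Psi>1 = \<Psi>2" using key[of p \<Psi>1 \<rho>1] assms(6,9) C(2) by (simp add: o_seqscale[OF O])
  have e2: "\<rho>2 = (1 - p) *\<^sub>R \<rho>3 + (1 - (1 - p)) *\<^sub>R \<rho>1" using assms(8) by simp
  have "refines T (sunit T) (scomp T A B) (seqc T C ((1 - p) ^ Suc n *\<^sub>R tpow T \<rho>3 (Suc n))) \<Psi>2"
    using R_seq[OF O R_pow[OF O r3 r1, of "1 - p" n] C(1)] assms(6,7) e2 C(3) by simp
  then have "\<Psi>3 = \<Psi>2" using key[of "1 - p" \<Psi>3 \<rho>3] assms(7,11) C(4) by (simp add: o_seqscale[OF O])
  have "\<rho>1 = marginal T A B \<Psi>1" "\<rho>3 = marginal T A B \<Psi>3"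
    using assms(9,11) unfolding purification_def by auto
  then show False using \<open>\<Psi>1 = \<Psi>2\<close> \<open>\<Psi>3 = \<Psi>2\<close> assms(5) by simp
qed

end
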